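(* Let $h:\Phi^c\to\Psi^d$ be a random simple tabulation function with fully random character tables, in the asymptotic regime $|\Phi|\to\infty$ with $c=|\Phi|^{o(1)}$ and $(c+d)^c=|\Psi|^{o(1)}$. Let $k=|\Psi|^{1/(5c)}$ and let $q>0$ (possibly depending on the other parameters). Let $P^q$ be the probability of the event that there exist a key set $X\subseteq\Phi^c$ with $|X|\le k$ and a list $L$ of distinct input position characters, each occurring in some key of $X$, with $|L|\le kc$, such that (with respect to $X$ and $L$) at least $q|L|$ output characters are derivable. Then $P^q=o\big(|\Phi|^2/|\Psi|^q\big)$.
   Context: $\Psi=[2^m]$ is identified with bit strings and $\oplus$ is bitwise exclusive-or applied coordinatewise. A simple tabulation function has character tables $h_0,\dots,h_{c-1}:\Phi\to\Psi^d$ and $h(x)=\bigoplus_{i\in[c]}h_i(x_i)$; fully random means all table entries independent uniform. An input position character is a pair $(i,a)\in[c]\times\Phi$; a key $x=(x_0,\dots,x_{c-1})$ is identified with the set $\{(i,x_i):i\in[c]\}$. For keys $x,y$, $x\triangle y=\{(i,x_i),(i,y_i): i\in[c], x_i\ne y_i\}$. For $y\in\Psi^d$, $y_j$ is its $j$-th coordinate. Given a key set $X$ and a list $L$ (a sequence of distinct input position characters), a pair $(\alpha,j)$ with $\alpha$ in $L$ and $j\in[d]$ (the "output character $h_i(a)_j$" for $\alpha=(i,a)$) is derivable if there exist $x,y\in X$ such that $x\triangle y\subseteq L$, $\alpha$ is the last element of $x\triangle y$ in the order of $L$, and $h(x)_j=h(y)_j$. The number of derivable output characters is the number of such derivable pairs.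 *)

theory Defs
  imports "HOL-Probability.Probability" "HOL-Library.Landau_Symbols"
begin

text \<open>Phi = {..<u} (characters), Psi = {..<2^m} (bit strings of length m),
  keys are lists of length c over Phi. Character tables are encoded as one function
  T with T (i, a, j) = h_i(a)_j.\<close>

fun bigxor :: "(nat \<Rightarrow> nat) \<Rightarrow> nat \<Rightarrow> nat" where
  "bigxor f 0 = 0"
| "bigxor f (Suc n) = xor (bigxor f n) (f n)"

definition tables :: "nat \<Rightarrow> nat \<Rightarrow> nat \<Rightarrow> nat \<Rightarrow> (nat \<times> nat \<times> nat \<Rightarrow> nat) set" where
  "tables u m c d = PiE ({..<c} \<times> {..<u} \<times> {..<d}) (\<lambda>_. {..<2^m})"

definition random_tables :: "nat \<Rightarrow> nat \<Rightarrow> nat \<Rightarrow> nat \<Rightarrow> (nat \<times> nat \<times> nat \<Rightarrow> nat) pmf" where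
  "random_tables u m c d = pmf_of_set (tables u m c d)"

definition hval :: "nat \<Rightarrow> (nat \<times> nat \<times> nat \<Rightarrow> nat) \<Rightarrow> nat list \<Rightarrow> nat \<Rightarrow> nat" where
  "hval c T x j = bigxor (\<lambda>i. T (i, x ! i, j)) c"

definition keys :: "nat \<Rightarrow> nat \<Rightarrow> nat list set" where
  "keys u c = {x. length x = c \<and> set x \<subseteq> {..<u}}"

definition pchars :: "nat \<Rightarrow> nat list \<Rightarrow> (nat \<times> nat) set" where
  "pchars c x = {(i, x ! i) | i. i < c}"

definition symd :: "nat \<Rightarrow> nat list \<Rightarrow> nat list \<Rightarrow> (nat \<times> nat) set" where
  "symd c x y = {(i, x ! i) | i. i < c \<and> x ! i \<noteq> y ! i} \<union> {(i, y ! i) | i. i < c \<and> x ! i \<noteq> y ! i}"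

definition is_last_in :: "(nat \<times> nat) list \<Rightarrow> (nat \<times> nat) set \<Rightarrow> nat \<times> nat \<Rightarrow> bool" where
  "is_last_in L S \<alpha> \<longleftrightarrow> \<alpha> \<in> S \<and> (\<forall>\<beta>\<in>S. \<forall>i<length L. \<forall>j<length L. L ! i = \<beta> \<and> L ! j = \<alpha> \<longrightarrow> i \<le> j)"

definition derivable :: "nat \<Rightarrow> nat \<Rightarrow> (nat \<times> nat \<times> nat \<Rightarrow> nat) \<Rightarrow> nat list set \<Rightarrow> (nat \<times> nat) list
    \<Rightarrow> ((nat \<times> nat) \<times> nat) set" where
  "derivable c d T X L = {(\<alpha>, j). \<alpha> \<in> set L \<and> j < d \<and>
     (\<exists>x\<in>X. \<exists>y\<in>X. symd c x y \<subseteq> set L \<and> is_last_in L (symd c x y) \<alpha> \<and> hval c T x j = hval c T y j)}"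

definition bad_event :: "nat \<Rightarrow> nat \<Rightarrow> nat \<Rightarrow> nat \<Rightarrow> real \<Rightarrow> (nat \<times> nat \<times> nat \<Rightarrow> nat) set" where
  "bad_event u m c d q = {T. \<exists>X L. X \<subseteq> keys u c \<and>
      real (card X) \<le> 2 powr (real m / (5 * real c)) \<and>
      L \<noteq> [] \<and> distinct L \<and> (\<forall>\<alpha>\<in>set L. \<exists>x\<in>X. \<alpha> \<in> pchars c x) \<and>
      real (length L) \<le> 2 powr (real m / (5 * real c)) * real c \<and>
      real (card (derivable c d T X L)) \<ge> q * real (length L)}"

definition Pq :: "nat \<Rightarrow> nat \<Rightarrow> nat \<Rightarrow> nat \<Rightarrow> real \<Rightarrow> real" where
  "Pq u m c d q = measure_pmf.prob (random_tables u m c d) (bad_event u m c d q)"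

end

theory Submission
  imports Defs
begin


definition xs :: "(nat \<times> nat \<times> nat \<Rightarrow> nat) \<Rightarrow> nat \<Rightarrow> (nat \<times> nat) set \<Rightarrow> nat" where
  "xs T j S = Finite_Set.fold (\<lambda>\<beta> acc. xor (T (fst \<beta>, snd \<beta>, j)) acc) 0 S"

lemma cfc: "comp_fun_commute (\<lambda>\<beta> acc. xor (T (fst \<beta>, snd \<beta>, j)) (acc::nat))"
  by unfold_locales (simp add: fun_eq_iff xor.left_commute)

lemma xs_empty[simp]: "xs T j {} = 0"
  by (simp add: xs_def)

lemma xs_insert: "finite S \<Longrightarrow> \<beta> \<notin> S \<Longrightarrow> xs T j (insert \<beta> S) = xor (T (fst \<beta>, snd \<beta>, j)) (xs T j S)"
  unfolding xs_def by (rule comp_fun_commute_on.fold_insert[OF cfc[unfolded comp_fun_commute_def']]) simp_all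

lemma xs_cong: "finite S \<Longrightarrow> (\<And>\<beta>. \<beta> \<in> S \<Longrightarrow> T1 (fst \<beta>, snd \<beta>, j) = T2 (fst \<beta>, snd \<beta>, j)) \<Longrightarrow> xs T1 j S = xs T2 j S"
proof (induction S rule: finite_induct)
  case empty then show ?case by simp
next
  case (insert x F) then show ?case by (simp add: xs_insert)
qed

definition symdn :: "nat \<Rightarrow> nat list \<Rightarrow> nat list \<Rightarrow> (nat \<times> nat) set" where
  "symdn n x y = {(i, x ! i) | i. i < n \<and> x ! i \<noteq> y ! i} \<union> {(i, y ! i) | i. i < n \<and> x ! i \<noteq> y ! i}"

lemma symdn_finite: "finite (symdn n x y)"
proof -
  have "symdn n x y \<subseteq> (\<lambda>i. (i, x!i)) ` {..<n} \<union> (\<lambda>i. (i, y!i)) ` {..<n}"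
    unfolding symdn_def by auto
  then show ?thesis by (rule finite_subset) auto
qed

lemma symdn_Suc: "symdn (Suc n) x y = (if x!n \<noteq> y!n then insert (n, x!n) (insert (n, y!n) (symdn n x y)) else symdn n x y)"
  unfolding symdn_def by (auto simp: less_Suc_eq)

lemma symdn_fst: "\<beta> \<in> symdn n x y \<Longrightarrow> fst \<beta> < n"
  unfolding symdn_def by auto

lemma hval_xor_gen: "xor (bigxor (\<lambda>i. T (i, x ! i, j)) n) (bigxor (\<lambda>i. T (i, y ! i, j)) n) = xs T j (symdn n x y)"
proof (induction n)
  case 0 then show ?case by (simp add: symdn_def)
next
  case (Suc n)
  have nin: "(n, a) \<notin> symdn n x y" for a using symdn_fst by fastforce
  show ?case
  proof (cases "x!n = y!n")
    case True
    then have A: "xs T j (symdn (Suc n) x y) = xs T j (symdn n x y)" by (simp add: symdn_Suc)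
    show ?thesis unfolding A bigxor.simps Suc.IH[symmetric] using True
      by (intro bit_eqI) (auto simp: bit_xor_iff)
  next
    case False
    then have A: "xs T j (symdn (Suc n) x y) = xor (T (n, x!n, j)) (xor (T (n, y!n, j)) (xs T j (symdn n x y)))"
      by (simp add: symdn_Suc xs_insert symdn_finite nin)
    show ?thesis unfolding A bigxor.simps Suc.IH[symmetric]
      by (intro bit_eqI) (auto simp: bit_xor_iff)
  qed
qed

lemma symd_eq: "symd c x y = symdn c x y"
  unfolding symd_def symdn_def by simp

lemma hval_xor: "xor (hval c T x j) (hval c T y j) = xs T j (symd c x y)"
  unfolding hval_def symd_eq by (rule hval_xor_gen)

lemma xor_eq0: assumes "xor (a::nat) b = 0" shows "a = b"
proof (rule bit_eqI)
  fix n
  have "\<not> bit (xor a b) n" using assms by simp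
  then show "bit a n = bit b n" by (simp add: bit_xor_iff)
qed

lemma symd_finite: "finite (symd c x y)"
  by (simp add: symd_eq symdn_finite)

lemma eq_from_hval:
  assumes "hval c T x j = hval c T y j" "\<alpha> \<in> symd c x y"
  shows "T (fst \<alpha>, snd \<alpha>, j) = xs T j (symd c x y - {\<alpha>})"
proof -
  have "xs T j (symd c x y) = 0" using hval_xor[of c T x j y] assms(1) by simp
  moreover have "symd c x y = insert \<alpha> (symd c x y - {\<alpha>})" using assms(2) by auto
  moreover have "xs T j (insert \<alpha> (symd c x y - {\<alpha>})) = xor (T (fst \<alpha>, snd \<alpha>, j)) (xs T j (symd c x y - {\<alpha>}))"
    by (rule xs_insert) (simp_all add: symd_finite)
  ultimately have "xor (T (fst \<alpha>, snd \<alpha>, j)) (xs T j (symd c x y - {\<alpha>})) = 0"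
    by simp
  then show ?thesis by (rule xor_eq0)
qed

lemma card_symd: "card (symd c x y) \<le> 2 * c"
proof -
  have "symd c x y \<subseteq> (\<lambda>i. (i, x!i)) ` {..<c} \<union> (\<lambda>i. (i, y!i)) ` {..<c}"
    unfolding symd_def by auto
  then have "card (symd c x y) \<le> card ((\<lambda>i. (i, x!i)) ` {..<c} \<union> (\<lambda>i. (i, y!i)) ` {..<c})"
    by (intro card_mono) auto
  also have "\<dots> \<le> card ((\<lambda>i. (i, x!i)) ` {..<c}) + card ((\<lambda>i. (i, y!i)) ` {..<c})"
    by (rule card_Un_le)
  also have "\<dots> \<le> c + c"
    using card_image_le[of "{..<c}" "\<lambda>i. (i, x!i)"] card_image_le[of "{..<c}" "\<lambda>i. (i, y!i)"] by simp
  finally show ?thesis by simp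
qed



definition before :: "(nat\<times>nat) list \<Rightarrow> nat\<times>nat \<Rightarrow> nat\<times>nat \<Rightarrow> bool" where
 "before L \<beta> \<alpha> \<longleftrightarrow> \<beta> \<in> set L \<and> (\<forall>i<length L. \<forall>j<length L. L!i = \<beta> \<and> L!j = \<alpha> \<longrightarrow> i < j)"

definition EE :: "nat \<Rightarrow> nat \<Rightarrow> nat \<Rightarrow> nat \<Rightarrow> ((nat\<times>nat)\<times>nat) set \<Rightarrow> (((nat\<times>nat)\<times>nat) \<Rightarrow> (nat\<times>nat) set) \<Rightarrow> (nat\<times>nat\<times>nat \<Rightarrow> nat) set" where
 "EE u m c d D W = {T \<in> tables u m c d. \<forall>p\<in>D. T (fst (fst p), snd (fst p), snd p) = xs T (snd p) (W p)}"

definition flat :: "(nat\<times>nat)\<times>nat \<Rightarrow> nat\<times>nat\<times>nat" where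
  "flat p = (fst (fst p), snd (fst p), snd p)"

lemma inj_flat: "inj flat"
  unfolding flat_def inj_def by auto

lemma EE_card:
  assumes L: "set L \<subseteq> {..<c} \<times> {..<u}"
    and D: "D \<subseteq> set L \<times> {..<d}"
    and W: "\<And>p \<beta>. p \<in> D \<Longrightarrow> \<beta> \<in> W p \<Longrightarrow> before L \<beta> (fst p)"
  shows "card (EE u m c d D W) * 2^(m * card D) \<le> card (tables u m c d)"
proof -
  define Dom where "Dom = {..<c} \<times> {..<u} \<times> {..<d}"
  define D' where "D' = flat ` D"
  have finDom: "finite Dom" unfolding Dom_def by auto
  have cD': "card D' = card D" unfolding D'_def by (rule card_image) (rule inj_on_subset[OF inj_flat], simp)
  have D'sub: "D' \<subseteq> Dom"
  proof
    fix x assume "x \<in> D'"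
    then obtain a b j where "((a,b),j) \<in> D" "x = (a,b,j)" unfolding D'_def flat_def by auto
    then show "x \<in> Dom" using D L unfolding Dom_def by auto
  qed
  have tab: "tables u m c d = PiE Dom (\<lambda>_. {..<2^m})" unfolding tables_def Dom_def by simp
  let ?R = "\<lambda>T. restrict T (Dom - D')"
  have inj: "inj_on ?R (EE u m c d D W)"
  proof (rule inj_onI)
    fix T1 T2 assume T1: "T1 \<in> EE u m c d D W" and T2: "T2 \<in> EE u m c d D W" and R: "?R T1 = ?R T2"
    have outside: "T1 x = T2 x" if "x \<in> Dom - D'" for x
    proof -
      have "?R T1 x = ?R T2 x" using R by simp
      then show ?thesis using that by simp
    qed
    have T1t: "T1 \<in> PiE Dom (\<lambda>_. {..<2^m})" and T2t: "T2 \<in> PiE Dom (\<lambda>_. {..<2^m})"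
      using T1 T2 tab unfolding EE_def by auto
    have claim: "\<forall>a b j. n < length L \<longrightarrow> L!n = (a,b) \<longrightarrow> j < d \<longrightarrow> T1 (a,b,j) = T2 (a,b,j)" for n
    proof (induction n rule: less_induct)
      case (less n)
      show ?case
      proof (intro allI impI)
        fix a b j assume n: "n < length L" and ab: "L!n = (a,b)" and j: "j < d"
        have abL: "(a,b) \<in> set L" using n ab nth_mem by metis
        show "T1 (a,b,j) = T2 (a,b,j)"
        proof (cases "((a,b),j) \<in> D")
          case True
          have e1: "T1 (a,b,j) = xs T1 j (W ((a,b),j))" using T1 True unfolding EE_def by fastforce
          have e2: "T2 (a,b,j) = xs T2 j (W ((a,b),j))" using T2 True unfolding EE_def by fastforce
          have Wsub: "W ((a,b),j) \<subseteq> set L" using W[OF True] unfolding before_def by auto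
          have "xs T1 j (W ((a,b),j)) = xs T2 j (W ((a,b),j))"
          proof (rule xs_cong)
            show "finite (W ((a, b), j))" using Wsub finite_subset by blast
          next
            fix \<beta> assume \<beta>: "\<beta> \<in> W ((a, b), j)"
            have bef: "before L \<beta> (a,b)" using W[OF True \<beta>] by simp
            then obtain n' where n': "n' < length L" "L!n' = \<beta>" unfolding before_def by (metis in_set_conv_nth)
            then have "n' < n" using bef n ab unfolding before_def by blast
            then have "\<forall>a b j. n' < length L \<longrightarrow> L!n' = (a,b) \<longrightarrow> j < d \<longrightarrow> T1 (a,b,j) = T2 (a,b,j)"
              by (rule less.IH)
            then show "T1 (fst \<beta>, snd \<beta>, j) = T2 (fst \<beta>, snd \<beta>, j)"
              using n' j by simp
          qed
          then show ?thesis using e1 e2 by simp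
        next
          case False
          have "(a,b,j) \<notin> D'"
          proof
            assume "(a,b,j) \<in> D'"
            then obtain p where "p \<in> D" "(a,b,j) = flat p" unfolding D'_def by auto
            moreover then have "p = ((a,b),j)" unfolding flat_def by (cases p) auto
            ultimately show False using False by simp
          qed
          moreover have "(a,b,j) \<in> Dom" using abL L j unfolding Dom_def by auto
          ultimately show ?thesis using outside by blast
        qed
      qed
    qed
    show "T1 = T2"
    proof (rule ext)
      fix x :: "nat \<times> nat \<times> nat"
      show "T1 x = T2 x"
      proof (cases "x \<in> Dom")
        case False
        then show ?thesis using PiE_arb[OF T1t False] PiE_arb[OF T2t False] by simp
      next
        case xD: True
        show ?thesis
        proof (cases "x \<in> D'")
          case False then show ?thesis using xD outside by blast
        next
          case True
          then obtain p where p: "p \<in> D" "x = flat p" unfolding D'_def by auto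
          define a where "a = fst (fst p)"
          define b where "b = snd (fst p)"
          define j where "j = snd p"
          have pe: "p = ((a,b),j)" unfolding a_def b_def j_def by simp
          have "(a,b) \<in> set L" "j < d" using p(1) D pe by auto
          then obtain n where n: "n < length L" "L!n = (a,b)" by (auto simp: in_set_conv_nth)
          have "T1 (a,b,j) = T2 (a,b,j)" using claim[of n] n \<open>j < d\<close> by blast
          then show ?thesis using p(2) pe by (simp add: flat_def)
        qed
      qed
    qed
  qed
  have img: "?R ` EE u m c d D W \<subseteq> PiE (Dom - D') (\<lambda>_. {..<2^m})"
  proof
    fix F assume "F \<in> ?R ` EE u m c d D W"
    then obtain T where T: "T \<in> EE u m c d D W" "F = ?R T" by auto
    then have "T \<in> PiE Dom (\<lambda>_. {..<2^m})" using tab unfolding EE_def by auto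
    then show "F \<in> PiE (Dom - D') (\<lambda>_. {..<2^m})" using T(2) by (auto simp: PiE_iff)
  qed
  have "card (EE u m c d D W) = card (?R ` EE u m c d D W)" using inj by (simp add: card_image)
  also have "\<dots> \<le> card (PiE (Dom - D') (\<lambda>_. {..<(2::nat)^m}))"
    by (rule card_mono[OF _ img]) (simp add: finDom finite_PiE)
  also have "\<dots> = (2^m)^(card (Dom - D'))" using finDom by (simp add: card_PiE)
  finally have c1: "card (EE u m c d D W) \<le> (2^m)^(card (Dom - D'))" .
  have "card Dom = card (Dom - D') + card D'"
  proof -
    have "finite D'" using finDom D'sub finite_subset by blast
    then have "card (Dom - D') = card Dom - card D'" using D'sub by (rule card_Diff_subset)
    moreover have "card D' \<le> card Dom" using finDom D'sub by (rule card_mono)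
    ultimately show ?thesis by simp
  qed
  then have "card (tables u m c d) = (2^m)^(card (Dom - D')) * 2^(m * card D)"
    using tab finDom cD' by (simp add: card_PiE power_add power_mult)
  then show ?thesis using c1 by simp
qed



lemma card_subsets_le:
  fixes A :: "'a set"
  assumes "finite A"
  shows "card {S. S \<subseteq> A \<and> card S \<le> r} \<le> (card A + 1)^r"
proof -
  define B where "B = insert None (Some ` A)"
  define Ls where "Ls = {xs. set xs \<subseteq> B \<and> length xs = r}"
  define f where "f = (\<lambda>xs::'a option list. {a. Some a \<in> set xs})"
  have sub: "{S. S \<subseteq> A \<and> card S \<le> r} \<subseteq> f ` Ls"
  proof
    fix S assume S: "S \<in> {S. S \<subseteq> A \<and> card S \<le> r}"
    then have fS: "finite S" using assms finite_subset by blast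
    obtain ys where ys: "set ys = S" "distinct ys" using finite_distinct_list[OF fS] by blast
    have ly: "length ys = card S" using ys distinct_card by metis
    define xs where "xs = map Some ys @ replicate (r - card S) None"
    have "length xs = r" unfolding xs_def using ly S by simp
    moreover have "set xs \<subseteq> B" unfolding xs_def B_def using ys S by auto
    moreover have "f xs = S" unfolding f_def xs_def using ys by auto
    ultimately show "S \<in> f ` Ls" unfolding Ls_def by blast
  qed
  have fin: "finite Ls" unfolding Ls_def B_def using assms by (simp add: finite_lists_length_eq)
  have "card {S. S \<subseteq> A \<and> card S \<le> r} \<le> card (f ` Ls)"
    by (rule card_mono) (simp_all add: fin sub)
  also have "\<dots> \<le> card Ls" using fin by (rule card_image_le)
  also have "\<dots> = card B ^ r" unfolding Ls_def by (rule card_lists_length_eq) (simp add: B_def assms)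
  also have "card B = card A + 1" unfolding B_def using assms
    by (simp add: card_image)
  finally show ?thesis .
qed

lemma card_dlists_le:
  assumes "finite A"
  shows "card {L. length L = l \<and> distinct L \<and> set L \<subseteq> A} \<le> card A ^ l"
proof -
  have "card {L. length L = l \<and> distinct L \<and> set L \<subseteq> A} \<le> card {xs. set xs \<subseteq> A \<and> length xs = l}"
    by (rule card_mono) (auto simp: finite_lists_length_eq assms)
  also have "\<dots> = card A ^ l" by (rule card_lists_length_eq) (rule assms)
  finally show ?thesis .
qed

lemma finite_dlists: "finite A \<Longrightarrow> finite {L. length L = l \<and> distinct L \<and> set L \<subseteq> A}"
  by (rule finite_subset[of _ "{xs. set xs \<subseteq> A \<and> length xs = l}"]) (auto simp: finite_lists_length_eq)

lemma card_PiE_le: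
  assumes "finite A" "\<And>i. i \<in> A \<Longrightarrow> card (B i) \<le> M"
  shows "card (PiE A B) \<le> M ^ card A"
proof -
  have "card (PiE A B) = (\<Prod>i\<in>A. card (B i))" using assms(1) by (rule card_PiE)
  also have "\<dots> \<le> (\<Prod>i\<in>A. M)" by (rule prod_mono) (simp add: assms(2))
  also have "\<dots> = M ^ card A" by simp
  finally show ?thesis .
qed

lemma card_ksubsets_le:
  assumes "finite A"
  shows "card {D. D \<subseteq> A \<and> card D = s} \<le> card A ^ s"
proof -
  have "card {D. D \<subseteq> A \<and> card D = s} = card A choose s" using assms by (rule n_subsets)
  also have "\<dots> \<le> card A ^ s"
  proof (cases "s \<le> card A")
    case True then show ?thesis by (rule binomial_le_pow)
  next
    case False then show ?thesis by (simp add: binomial_eq_0)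
  qed
  finally show ?thesis .
qed



definition NN :: "nat \<Rightarrow> nat \<Rightarrow> nat" where
  "NN m c = nat \<lfloor>2 powr (real m / (5 * real c)) * real c\<rfloor>"
definition sl :: "real \<Rightarrow> nat \<Rightarrow> nat" where
  "sl q l = nat \<lceil>q * real l\<rceil>"
definition Ls :: "nat \<Rightarrow> nat \<Rightarrow> nat \<Rightarrow> (nat \<times> nat) list set" where
  "Ls u c l = {L. length L = l \<and> distinct L \<and> set L \<subseteq> {..<c} \<times> {..<u}}"
definition Ds :: "nat \<Rightarrow> (nat \<times> nat) list \<Rightarrow> nat \<Rightarrow> ((nat \<times> nat) \<times> nat) set set" where
  "Ds d L s = {D. D \<subseteq> set L \<times> {..<d} \<and> card D = s}"
definition Ws :: "nat \<Rightarrow> (nat \<times> nat) list \<Rightarrow> ((nat \<times> nat) \<times> nat) set \<Rightarrow> (((nat \<times> nat) \<times> nat) \<Rightarrow> (nat \<times> nat) set) set" where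
  "Ws c L D = PiE D (\<lambda>p. {S. S \<subseteq> set L \<and> card S \<le> 2 * c - 1 \<and> (\<forall>\<beta>\<in>S. before L \<beta> (fst p))})"

lemma derivable_iff: "p \<in> derivable c d T X L \<longleftrightarrow> fst p \<in> set L \<and> snd p < d \<and>
     (\<exists>x\<in>X. \<exists>y\<in>X. symd c x y \<subseteq> set L \<and> is_last_in L (symd c x y) (fst p) \<and> hval c T x (snd p) = hval c T y (snd p))"
  by (cases p) (simp add: derivable_def)

lemma bad_sub:
  assumes c: "c \<ge> 1" and q: "q > 0"
  shows "tables u m c d \<inter> bad_event u m c d q \<subseteq>
    (\<Union>l\<in>{2..NN m c}. \<Union>L\<in>Ls u c l. \<Union>D\<in>Ds d L (sl q l). \<Union>W\<in>Ws c L D. EE u m c d D W)"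
proof
  fix T assume T: "T \<in> tables u m c d \<inter> bad_event u m c d q"
  then obtain X L where X: "X \<subseteq> keys u c" "real (card X) \<le> 2 powr (real m / (5 * real c))"
    and L: "L \<noteq> []" "distinct L" "\<forall>\<alpha>\<in>set L. \<exists>x\<in>X. \<alpha> \<in> pchars c x"
    "real (length L) \<le> 2 powr (real m / (5 * real c)) * real c"
    and DV: "real (card (derivable c d T X L)) \<ge> q * real (length L)"
    unfolding bad_event_def by blast
  define l where "l = length L"
  define DV where "DV = derivable c d T X L"
  have setL: "set L \<subseteq> {..<c} \<times> {..<u}"
  proof
    fix \<alpha> assume "\<alpha> \<in> set L"
    then obtain x where x: "x \<in> X" "\<alpha> \<in> pchars c x" using L(3) by blast
    then have "x \<in> keys u c" using X(1) by blast
    then have xk: "length x = c" "set x \<subseteq> {..<u}" unfolding keys_def by auto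
    obtain i where i: "i < c" "\<alpha> = (i, x!i)" using x(2) unfolding pchars_def by blast
    have "x!i \<in> set x" using i(1) xk(1) by simp
    then show "\<alpha> \<in> {..<c} \<times> {..<u}" using i xk(2) by auto
  qed
  have DVsub: "DV \<subseteq> set L \<times> {..<d}" unfolding DV_def using derivable_iff by (auto simp: mem_Times_iff)
  then have finDV: "finite DV" using finite_subset by blast
  have l1: "l \<ge> 1" using L(1) unfolding l_def by (cases L) auto
  have sDV: "sl q l \<le> card DV"
  proof -
    have h: "q * real l \<le> real (card DV)" using DV unfolding DV_def l_def by simp
    then have "\<lceil>q * real l\<rceil> \<le> int (card DV)" by (intro ceiling_le) simp
    then show ?thesis unfolding sl_def using h by simp
  qed
  have s1: "sl q l \<ge> 1"
  proof -
    have "q * real l > 0" using q l1 by simp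
    then have "0 < \<lceil>q * real l\<rceil>" by simp
    then have "0 < sl q l" unfolding sl_def using zero_less_nat_eq by blast
    then show ?thesis by simp
  qed
  obtain D where D: "D \<subseteq> DV" "card D = sl q l" using obtain_subset_with_card_n[OF sDV] by metis
  have "D \<noteq> {}" using D(2) s1 by auto
  then obtain p0 where p0: "p0 \<in> D" by blast
  have l2: "l \<ge> 2"
  proof -
    have "p0 \<in> DV" using p0 D by blast
    then obtain x y where xy: "symd c x y \<subseteq> set L" "is_last_in L (symd c x y) (fst p0)"
      unfolding DV_def derivable_iff by blast
    then have "fst p0 \<in> symd c x y" unfolding is_last_in_def by blast
    then obtain i where i: "i < c" "x!i \<noteq> y!i" unfolding symd_def by blast
    then have "{(i, x!i), (i, y!i)} \<subseteq> set L" using xy(1) unfolding symd_def by blast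
    then have "card {(i, x!i), (i, y!i)} \<le> card (set L)" by (rule card_mono[rotated]) simp
    moreover have "card {(i, x!i), (i, y!i)} = 2" using i by simp
    ultimately show ?thesis unfolding l_def using distinct_card[OF L(2)] by simp
  qed
  have lN: "l \<le> NN m c"
  proof -
    have "real l \<le> 2 powr (real m / (5 * real c)) * real c" using L(4) unfolding l_def by simp
    then show ?thesis unfolding NN_def by (simp add: le_nat_floor)
  qed
  define P where "P = (\<lambda>p xy. fst xy \<in> X \<and> snd xy \<in> X \<and> symd c (fst xy) (snd xy) \<subseteq> set L \<and>
       is_last_in L (symd c (fst xy) (snd xy)) (fst p) \<and> hval c T (fst xy) (snd p) = hval c T (snd xy) (snd p))"
  define wit where "wit = (\<lambda>p. SOME xy. P p xy)"
  have witP: "P p (wit p)" if "p \<in> D" for p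
  proof -
    have "p \<in> DV" using that D by blast
    then have "\<exists>xy. P p xy" unfolding DV_def derivable_iff P_def by auto
    then show ?thesis unfolding wit_def by (rule someI_ex)
  qed
  define W where "W = restrict (\<lambda>p. symd c (fst (wit p)) (snd (wit p)) - {fst p}) D"
  have WW: "W \<in> Ws c L D"
    unfolding Ws_def
  proof (rule PiE_I)
    fix p assume p: "p \<in> D"
    let ?S = "symd c (fst (wit p)) (snd (wit p))"
    have Pp: "P p (wit p)" using witP[OF p] .
    have S1: "?S \<subseteq> set L" and S2: "is_last_in L ?S (fst p)" using Pp unfolding P_def by auto
    have aS: "fst p \<in> ?S" using S2 unfolding is_last_in_def by blast
    have "card (?S - {fst p}) = card ?S - 1" using aS symd_finite by (simp add: card_Diff_singleton)
    then have cS: "card (?S - {fst p}) \<le> 2 * c - 1" using card_symd[of c "fst (wit p)" "snd (wit p)"] by linarith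
    have bS: "before L \<beta> (fst p)" if "\<beta> \<in> ?S - {fst p}" for \<beta>
    proof -
      have "\<beta> \<in> set L" using that S1 by blast
      moreover have "i < j" if "i < length L" "j < length L" "L!i = \<beta>" "L!j = fst p" for i j
      proof -
        have "i \<le> j" using S2 \<open>\<beta> \<in> ?S - {fst p}\<close> that unfolding is_last_in_def by blast
        moreover have "i \<noteq> j" using that \<open>\<beta> \<in> ?S - {fst p}\<close> by auto
        ultimately show ?thesis by simp
      qed
      ultimately show ?thesis unfolding before_def by blast
    qed
    show "W p \<in> {S. S \<subseteq> set L \<and> card S \<le> 2 * c - 1 \<and> (\<forall>\<beta>\<in>S. before L \<beta> (fst p))}"
      unfolding W_def using p S1 cS bS by auto
  next
    fix p assume "p \<notin> D" then show "W p = undefined" unfolding W_def by simp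
  qed
  have TE: "T \<in> EE u m c d D W"
    unfolding EE_def
  proof (intro CollectI conjI ballI)
    show "T \<in> tables u m c d" using T by blast
  next
    fix p assume p: "p \<in> D"
    have Pp: "P p (wit p)" using witP[OF p] .
    let ?S = "symd c (fst (wit p)) (snd (wit p))"
    have aS: "fst p \<in> ?S" using Pp unfolding P_def is_last_in_def by blast
    have h: "hval c T (fst (wit p)) (snd p) = hval c T (snd (wit p)) (snd p)" using Pp unfolding P_def by blast
    show "T (fst (fst p), snd (fst p), snd p) = xs T (snd p) (W p)"
      using eq_from_hval[OF h aS] p unfolding W_def by simp
  qed
  have "L \<in> Ls u c l" unfolding Ls_def l_def using L(2) setL by simp
  moreover have "D \<in> Ds d L (sl q l)" unfolding Ds_def using D DVsub by auto
  moreover have "l \<in> {2..NN m c}" using l2 lN by simp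
  ultimately show "T \<in> (\<Union>l\<in>{2..NN m c}. \<Union>L\<in>Ls u c l. \<Union>D\<in>Ds d L (sl q l). \<Union>W\<in>Ws c L D. EE u m c d D W)"
    using WW TE by blast
qed



lemma fin_tables: "finite (tables u m c d)" unfolding tables_def by (simp add: finite_PiE)
lemma ne_tables: "tables u m c d \<noteq> {}" unfolding tables_def by (simp add: PiE_eq_empty_iff lessThan_empty_iff)

lemma finite_Ws: "finite (Ws c L D)" if "finite D"
  unfolding Ws_def using that by (intro finite_PiE) auto

lemma finite_Ds: "finite (Ds d L s)"
  unfolding Ds_def by (rule finite_subset[of _ "Pow (set L \<times> {..<d})"]) auto

lemma inner_bound:
  assumes L: "L \<in> Ls u c l" and D: "D \<in> Ds d L s"
  shows "(\<Sum>W\<in>Ws c L D. card (EE u m c d D W)) * 2^(m * s) \<le> ((l+1)^(2*c-1))^s * card (tables u m c d)"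
proof -
  have setL: "set L \<subseteq> {..<c} \<times> {..<u}" and lL: "length L = l" and dL: "distinct L" using L unfolding Ls_def by auto
  have Dsub: "D \<subseteq> set L \<times> {..<d}" and cD: "card D = s" using D unfolding Ds_def by auto
  have finD: "finite D" using Dsub finite_subset by blast
  have "(\<Sum>W\<in>Ws c L D. card (EE u m c d D W)) * 2^(m * s) = (\<Sum>W\<in>Ws c L D. card (EE u m c d D W) * 2^(m * s))"
    by (simp add: sum_distrib_right)
  also have "\<dots> \<le> (\<Sum>W\<in>Ws c L D. card (tables u m c d))"
  proof (rule sum_mono)
    fix W assume W: "W \<in> Ws c L D"
    have "card (EE u m c d D W) * 2^(m * card D) \<le> card (tables u m c d)"
    proof (rule EE_card[OF setL Dsub])
      fix p \<beta> assume "p \<in> D" "\<beta> \<in> W p"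
      then show "before L \<beta> (fst p)" using W unfolding Ws_def by (auto simp: PiE_iff)
    qed
    then show "card (EE u m c d D W) * 2^(m * s) \<le> card (tables u m c d)" using cD by simp
  qed
  also have "\<dots> = card (Ws c L D) * card (tables u m c d)" by simp
  also have "card (Ws c L D) \<le> ((l+1)^(2*c-1))^s"
  proof -
    have "card (Ws c L D) \<le> ((card (set L) + 1)^(2*c-1)) ^ card D"
      unfolding Ws_def
    proof (rule card_PiE_le[OF finD])
      fix p assume "p \<in> D"
      have "card {S. S \<subseteq> set L \<and> card S \<le> 2 * c - 1 \<and> (\<forall>\<beta>\<in>S. before L \<beta> (fst p))}
          \<le> card {S. S \<subseteq> set L \<and> card S \<le> 2 * c - 1}"
        by (rule card_mono) auto
      also have "\<dots> \<le> (card (set L) + 1)^(2*c-1)" by (rule card_subsets_le) simp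
      finally show "card {S. S \<subseteq> set L \<and> card S \<le> 2 * c - 1 \<and> (\<forall>\<beta>\<in>S. before L \<beta> (fst p))}
          \<le> (card (set L) + 1)^(2*c-1)" .
    qed
    then show ?thesis using cD lL distinct_card[OF dL] by simp
  qed
  finally show ?thesis by (simp add: mult_right_mono)
qed

lemma mid_bound:
  assumes L: "L \<in> Ls u c l"
  shows "(\<Sum>D\<in>Ds d L s. \<Sum>W\<in>Ws c L D. card (EE u m c d D W)) * 2^(m * s) \<le> (l*d)^s * (((l+1)^(2*c-1))^s * card (tables u m c d))"
proof -
  have lL: "length L = l" and dL: "distinct L" using L unfolding Ls_def by auto
  have "(\<Sum>D\<in>Ds d L s. \<Sum>W\<in>Ws c L D. card (EE u m c d D W)) * 2^(m * s)
     = (\<Sum>D\<in>Ds d L s. (\<Sum>W\<in>Ws c L D. card (EE u m c d D W)) * 2^(m * s))" by (simp add: sum_distrib_right)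
  also have "\<dots> \<le> (\<Sum>D\<in>Ds d L s. ((l+1)^(2*c-1))^s * card (tables u m c d))"
    by (rule sum_mono) (rule inner_bound[OF L])
  also have "\<dots> = card (Ds d L s) * (((l+1)^(2*c-1))^s * card (tables u m c d))" by simp
  also have "card (Ds d L s) \<le> (l*d)^s"
  proof -
    have "card (Ds d L s) \<le> card (set L \<times> {..<d}) ^ s" unfolding Ds_def by (rule card_ksubsets_le) simp
    then show ?thesis using lL distinct_card[OF dL] by (simp add: card_cartesian_product)
  qed
  finally show ?thesis by (simp add: mult_right_mono)
qed

lemma outer_bound:
  "(\<Sum>L\<in>Ls u c l. \<Sum>D\<in>Ds d L s. \<Sum>W\<in>Ws c L D. card (EE u m c d D W)) * 2^(m * s)
     \<le> (c*u)^l * ((l*d)^s * (((l+1)^(2*c-1))^s * card (tables u m c d)))"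
proof -
  have "(\<Sum>L\<in>Ls u c l. \<Sum>D\<in>Ds d L s. \<Sum>W\<in>Ws c L D. card (EE u m c d D W)) * 2^(m * s)
     = (\<Sum>L\<in>Ls u c l. (\<Sum>D\<in>Ds d L s. \<Sum>W\<in>Ws c L D. card (EE u m c d D W)) * 2^(m * s))" by (simp add: sum_distrib_right)
  also have "\<dots> \<le> (\<Sum>L\<in>Ls u c l. (l*d)^s * (((l+1)^(2*c-1))^s * card (tables u m c d)))"
    by (rule sum_mono) (rule mid_bound)
  also have "\<dots> = card (Ls u c l) * ((l*d)^s * (((l+1)^(2*c-1))^s * card (tables u m c d)))" by simp
  also have "card (Ls u c l) \<le> (c*u)^l"
  proof -
    have "card (Ls u c l) \<le> card ({..<c} \<times> {..<u}) ^ l" unfolding Ls_def by (rule card_dlists_le) simp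
    then show ?thesis by (simp add: card_cartesian_product)
  qed
  finally show ?thesis by (simp add: mult_right_mono)
qed

lemma div_le_div_aux: "(0::real) < T \<Longrightarrow> 0 < P \<Longrightarrow> a * P \<le> B * T \<Longrightarrow> a / T \<le> B / P"
  by (simp add: field_simps)

lemma Pq_bound:
  assumes c: "c \<ge> 1" and q: "q > 0"
  shows "Pq u m c d q \<le> (\<Sum>l\<in>{2..NN m c}. real ((c*u)^l * (l*d)^(sl q l) * ((l+1)^(2*c-1))^(sl q l)) / 2^(m * sl q l))"
proof -
  let ?T = "tables u m c d"
  let ?U = "\<lambda>l. \<Union>L\<in>Ls u c l. \<Union>D\<in>Ds d L (sl q l). \<Union>W\<in>Ws c L D. EE u m c d D W"
  let ?S = "\<lambda>l. \<Sum>L\<in>Ls u c l. \<Sum>D\<in>Ds d L (sl q l). \<Sum>W\<in>Ws c L D. card (EE u m c d D W)"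
  have finLs: "finite (Ls u c l)" for l unfolding Ls_def by (rule finite_dlists) simp
  have finDs: "D \<in> Ds d L s \<Longrightarrow> finite D" for D L s unfolding Ds_def using finite_subset by blast
  have cU: "card (?U l) \<le> ?S l" for l
  proof -
    have "card (?U l) \<le> (\<Sum>L\<in>Ls u c l. card (\<Union>D\<in>Ds d L (sl q l). \<Union>W\<in>Ws c L D. EE u m c d D W))"
      by (rule card_UN_le[OF finLs])
    also have "\<dots> \<le> ?S l"
    proof (rule sum_mono)
      fix L
      have "card (\<Union>D\<in>Ds d L (sl q l). \<Union>W\<in>Ws c L D. EE u m c d D W) \<le> (\<Sum>D\<in>Ds d L (sl q l). card (\<Union>W\<in>Ws c L D. EE u m c d D W))"
        by (rule card_UN_le[OF finite_Ds])
      also have "\<dots> \<le> (\<Sum>D\<in>Ds d L (sl q l). \<Sum>W\<in>Ws c L D. card (EE u m c d D W))"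
        by (rule sum_mono) (rule card_UN_le[OF finite_Ws[OF finDs]])
      finally show "card (\<Union>D\<in>Ds d L (sl q l). \<Union>W\<in>Ws c L D. EE u m c d D W) \<le> (\<Sum>D\<in>Ds d L (sl q l). \<Sum>W\<in>Ws c L D. card (EE u m c d D W))" .
    qed
    finally show ?thesis .
  qed
  have "card (?T \<inter> bad_event u m c d q) \<le> card (\<Union>l\<in>{2..NN m c}. ?U l)"
    by (rule card_mono[OF _ bad_sub[OF c q]]) (auto intro!: finite_subset[OF _ fin_tables] simp: EE_def)
  also have "\<dots> \<le> (\<Sum>l\<in>{2..NN m c}. card (?U l))" by (rule card_UN_le) simp
  also have "\<dots> \<le> (\<Sum>l\<in>{2..NN m c}. ?S l)" by (rule sum_mono) (rule cU)
  finally have "card (?T \<inter> bad_event u m c d q) \<le> (\<Sum>l\<in>{2..NN m c}. ?S l)" .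
  then have "real (card (?T \<inter> bad_event u m c d q)) \<le> real (\<Sum>l\<in>{2..NN m c}. ?S l)"
    by (rule of_nat_mono)
  also have "\<dots> = (\<Sum>l\<in>{2..NN m c}. real (?S l))" by (rule of_nat_sum)
  finally have c1: "real (card (?T \<inter> bad_event u m c d q)) \<le> (\<Sum>l\<in>{2..NN m c}. real (?S l))" .
  have cT: "real (card ?T) > 0" using fin_tables ne_tables by (simp add: card_gt_0_iff)
  have Pq_eq: "Pq u m c d q = real (card (?T \<inter> bad_event u m c d q)) / real (card ?T)"
    unfolding Pq_def random_tables_def using fin_tables ne_tables by (simp add: measure_pmf_of_set)
  have each: "real (?S l) / real (card ?T) \<le> real ((c*u)^l * (l*d)^(sl q l) * ((l+1)^(2*c-1))^(sl q l)) / 2^(m * sl q l)" for l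
  proof -
    have "?S l * 2^(m * sl q l) \<le> (c*u)^l * ((l*d)^(sl q l) * (((l+1)^(2*c-1))^(sl q l) * card ?T))"
      by (rule outer_bound)
    then have "real (?S l * 2^(m * sl q l)) \<le> real ((c*u)^l * (l*d)^(sl q l) * ((l+1)^(2*c-1))^(sl q l) * card ?T)"
      by (simp only: mult.assoc of_nat_le_iff)
    then have "real (?S l) * 2^(m * sl q l) \<le> real ((c*u)^l * (l*d)^(sl q l) * ((l+1)^(2*c-1))^(sl q l)) * real (card ?T)"
      by (simp only: of_nat_mult of_nat_power of_nat_numeral)
    then show ?thesis using cT by (intro div_le_div_aux) simp_all
  qed
  have "Pq u m c d q \<le> (\<Sum>l\<in>{2..NN m c}. real (?S l)) / real (card ?T)"
    unfolding Pq_eq using c1 cT by (simp add: divide_right_mono)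
  also have "\<dots> = (\<Sum>l\<in>{2..NN m c}. real (?S l) / real (card ?T))" by (simp add: sum_divide_distrib)
  also have "\<dots> \<le> (\<Sum>l\<in>{2..NN m c}. real ((c*u)^l * (l*d)^(sl q l) * ((l+1)^(2*c-1))^(sl q l)) / 2^(m * sl q l))"
    by (rule sum_mono) (rule each)
  finally show ?thesis .
qed



lemma exp_pow_eq: "0 < (x::real) \<Longrightarrow> x ^ n = exp (real n * ln x)"
  by (simp add: exp_of_nat_mult)

lemma NN_le: "real (NN m c) \<le> 2 powr (real m / (5 * real c)) * real c"
proof -
  have K0: "0 \<le> 2 powr (real m / (5 * real c)) * real c" by simp
  then have "0 \<le> \<lfloor>2 powr (real m / (5 * real c)) * real c\<rfloor>" by simp
  then have "real (NN m c) = of_int \<lfloor>2 powr (real m / (5 * real c)) * real c\<rfloor>"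
    unfolding NN_def by simp
  also have "\<dots> \<le> 2 powr (real m / (5 * real c)) * real c" by (rule of_int_floor_le)
  finally show ?thesis .
qed

lemma term_bound:
  fixes u m c d l s :: nat and q :: real
  assumes c: "c \<ge> 1" and d: "d \<ge> 1" and q: "q > 0" and u: "u \<ge> 1"
    and H1: "5 * real c * ln (real (c + d)) \<le> real m * ln 2 / 20"
    and l: "2 \<le> l" "l \<le> NN m c"
    and s: "q * real l \<le> real s"
  shows "real ((c*u)^l * (l*d)^s * ((l+1)^(2*c-1))^s) / 2^(m * s)
         \<le> exp (real l * (ln (real c) + ln (real u) - 11/20 * (real m * q * ln 2)))"
proof -
  define Cl :: real where "Cl = real l * real d * real (l+1)^(2*c-1)"
  have Cl0: "Cl > 0" unfolding Cl_def using l d by simp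
  have eq: "real ((c*u)^l * (l*d)^s * ((l+1)^(2*c-1))^s) / 2^(m * s) = (real c * real u)^l * (Cl / 2^m)^s"
    unfolding Cl_def by (simp add: power_mult_distrib power_mult power_divide)
  define x where "x = real m / (5 * real c)"
  have cpos: "real c > 0" using c by simp
  have lK: "real l \<le> 2 powr x * real c" using NN_le[of m c] l(2) unfolding x_def by linarith
  have p1: "1 \<le> 2 powr x" unfolding x_def by (rule ge_one_powr_ge_zero) simp_all
  have "1 \<le> 2 powr x * real c" using p1 c by (metis mult_mono' of_nat_1 of_nat_mono mult_1_left zero_le_one order_trans)
  then have l1: "real l + 1 \<le> 2 * (2 powr x * real c)" using lK by linarith
  have lnl1: "ln (real l + 1) \<le> ln 2 + x * ln 2 + ln (real c)"
  proof -
    have "ln (real l + 1) \<le> ln (2 * (2 powr x * real c))" using l1 by simp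
    also have "\<dots> = ln 2 + x * ln 2 + ln (real c)" using cpos by (simp add: ln_mult ln_powr)
    finally show ?thesis .
  qed
  have cd2: "ln 2 \<le> ln (real (c+d))" using c d by simp
  have cdc: "ln (real c) \<le> ln (real (c+d))" using c by simp
  have cdd: "ln (real d) \<le> ln (real (c+d))" using d by simp
  have lncd0: "0 \<le> ln (real (c+d))" using c by simp
  have cdd2: "ln (real (c+d)) \<le> real c * ln (real (c+d))" using mult_right_mono[of 1 "real c" "ln (real (c+d))"] c lncd0
    by simp
  have lnCl: "ln Cl = ln (real l) + ln (real d) + real (2*c-1) * ln (real l + 1)"
    unfolding Cl_def using l d by (simp add: ln_mult ln_realpow)
  have "ln (real l) \<le> ln (real l + 1)" using l by simp
  then have "ln Cl \<le> ln (real d) + (real (2*c-1) + 1) * ln (real l + 1)"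
    unfolding lnCl by (simp add: algebra_simps)
  also have "real (2*c-1) + 1 = 2 * real c" using c by (simp add: of_nat_diff)
  also have "ln (real d) + 2 * real c * ln (real l + 1) \<le> ln (real d) + 2 * real c * (ln 2 + x * ln 2 + ln (real c))"
    using lnl1 cpos by simp
  also have "\<dots> = ln (real d) + 2 * real c * ln 2 + 2 * real m / 5 * ln 2 + 2 * real c * ln (real c)"
    unfolding x_def using cpos by (simp add: field_simps)
  also have "\<dots> \<le> real c * ln (real (c+d)) + 2 * real c * ln (real (c+d)) + 2 * real m / 5 * ln 2 + 2 * real c * ln (real (c+d))"
  proof -
    have "2 * real c * ln 2 \<le> 2 * real c * ln (real (c+d))" using cd2 cpos by simp
    moreover have "2 * real c * ln (real c) \<le> 2 * real c * ln (real (c+d))" using cdc cpos by simp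
    ultimately show ?thesis using cdd cdd2 by linarith
  qed
  also have "\<dots> \<le> 9/20 * (real m * ln 2)" using H1 by simp
  finally have lnClb: "ln Cl \<le> 9/20 * (real m * ln 2)" .
  define X where "X = ln Cl - real m * ln 2"
  define Y where "Y = - 11/20 * (real m * ln 2)"
  have XY: "X \<le> Y" unfolding X_def Y_def using lnClb by simp
  have Y0: "Y \<le> 0" unfolding Y_def by simp
  have "ln (Cl / 2^m) = X" unfolding X_def using Cl0 by (simp add: ln_div ln_realpow)
  then have e2: "(Cl / 2^m)^s = exp (real s * X)" using Cl0 exp_pow_eq[of "Cl / 2^m" s] by simp
  have e1: "(real c * real u)^l = exp (real l * (ln (real c) + ln (real u)))"
    using exp_pow_eq[of "real c * real u" l] c u by (simp add: ln_mult)
  have "real s * X \<le> real s * Y" using XY by (simp add: mult_left_mono)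
  also have "\<dots> \<le> (q * real l) * Y" using s Y0 by (rule mult_right_mono_neg)
  finally have sX: "real s * X \<le> q * real l * Y" .
  have "real ((c*u)^l * (l*d)^s * ((l+1)^(2*c-1))^s) / 2^(m * s) = exp (real l * (ln (real c) + ln (real u)) + real s * X)"
    unfolding eq e1 e2 by (simp add: exp_add)
  also have "\<dots> \<le> exp (real l * (ln (real c) + ln (real u) - 11/20 * (real m * q * ln 2)))"
  proof (subst exp_le_cancel_iff)
    have "q * real l * Y = real l * (- 11/20 * (real m * q * ln 2))" unfolding Y_def by (simp add: algebra_simps)
    then show "real l * (ln (real c) + ln (real u)) + real s * X \<le> real l * (ln (real c) + ln (real u) - 11/20 * (real m * q * ln 2))"
      using sX by (simp add: algebra_simps)
  qed
  finally show ?thesis .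
qed

lemma geo_bound:
  fixes t :: real
  assumes "0 \<le> t" "t \<le> 1/2"
  shows "(\<Sum>l\<in>{2..N}. t^l) \<le> 2 * t^2"
proof -
  have gen: "(\<Sum>l\<in>{2..Suc n}. t^l) \<le> 2 * t^2 - 2 * t^(Suc (Suc n))" for n
  proof (induction n)
    case 0 then show ?case by (simp add: power2_eq_square)
  next
    case (Suc n)
    have "(\<Sum>l\<in>{2..Suc (Suc n)}. t^l) = t^(Suc (Suc n)) + (\<Sum>l\<in>{2..Suc n}. t^l)"
      by (subst atLeastAtMostSuc_conv) simp_all
    also have "\<dots> \<le> t^(Suc (Suc n)) + (2 * t^2 - 2 * t^(Suc (Suc n)))" using Suc by simp
    also have "\<dots> \<le> 2 * t^2 - 2 * t^(Suc (Suc (Suc n)))"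
    proof -
      have "2 * t^(Suc (Suc (Suc n))) = (2 * t) * t^(Suc (Suc n))" by simp
      also have "\<dots> \<le> 1 * t^(Suc (Suc n))" using assms by (intro mult_right_mono) simp_all
      finally show ?thesis by simp
    qed
    finally show ?case .
  qed
  show ?thesis
  proof (cases N)
    case 0 then show ?thesis by simp
  next
    case (Suc n)
    then have "(\<Sum>l\<in>{2..N}. t^l) \<le> 2*t^2 - 2*t^(Suc (Suc n))" using gen[of n] by (simp only:)
    moreover have "0 \<le> t^(Suc (Suc n))" using assms by simp
    ultimately show ?thesis by linarith
  qed
qed



lemma Pq_nonneg: "0 \<le> Pq u m c d q" unfolding Pq_def by simp
lemma Pq_le1: "Pq u m c d q \<le> 1" unfolding Pq_def by simp

lemma final_bound:
  fixes u m c d :: nat and q :: real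
  assumes c: "c \<ge> 1" and d: "d \<ge> 1" and q: "q > 0" and u: "u \<ge> 1"
    and H1: "5 * real c * ln (real (c + d)) \<le> real m * ln 2 / 20"
    and H2: "ln (real c) \<le> ln (real u) / 22"
  shows "Pq u m c d q / (real u ^ 2 / 2 powr (real m * q)) \<le> 4 * real u powr (-1/11)"
proof -
  define a where "a = ln (real u)"
  define g where "g = ln (real c)"
  define b where "b = real m * q * ln 2"
  define A where "A = g + a - 11/20 * b"
  define t where "t = exp A"
  define P where "P = Pq u m c d q"
  have a0: "0 \<le> a" unfolding a_def using u by simp
  have b0: "0 \<le> b" unfolding b_def using q by simp
  have ln2: "0 < ln (2::real)" by simp
  have P0: "0 \<le> P" "P \<le> 1" unfolding P_def using Pq_nonneg Pq_le1 by auto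
  have Psum: "P \<le> (\<Sum>l\<in>{2..NN m c}. t^l)"
  proof -
    have "P \<le> (\<Sum>l\<in>{2..NN m c}. real ((c*u)^l * (l*d)^(sl q l) * ((l+1)^(2*c-1))^(sl q l)) / 2^(m * sl q l))"
      unfolding P_def by (rule Pq_bound[OF c q])
    also have "\<dots> \<le> (\<Sum>l\<in>{2..NN m c}. t^l)"
    proof (rule sum_mono)
      fix l assume l: "l \<in> {2..NN m c}"
      have s: "q * real l \<le> real (sl q l)" unfolding sl_def by (rule real_nat_ceiling_ge)
      have "real ((c*u)^l * (l*d)^(sl q l) * ((l+1)^(2*c-1))^(sl q l)) / 2^(m * sl q l)
         \<le> exp (real l * (ln (real c) + ln (real u) - 11/20 * (real m * q * ln 2)))"
        using l by (intro term_bound[OF c d q u H1 _ _ s]) auto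
      also have "\<dots> = t^l" unfolding t_def A_def g_def a_def b_def by (simp add: exp_of_nat_mult[symmetric])
      finally show "real ((c*u)^l * (l*d)^(sl q l) * ((l+1)^(2*c-1))^(sl q l)) / 2^(m * sl q l) \<le> t^l" .
    qed
    finally show ?thesis .
  qed
  have upos: "0 < real u" using u by simp
  have eqR: "P / (real u ^ 2 / 2 powr (real m * q)) = P * exp (b - 2 * a)"
  proof -
    have "real u ^ 2 = exp (2 * a)" unfolding a_def using upos exp_pow_eq[of "real u" 2] by simp
    moreover have "2 powr (real m * q) = exp b" unfolding b_def powr_def by simp
    ultimately show ?thesis by (simp add: exp_diff)
  qed
  have eqT: "4 * real u powr (-1/11) = 4 * exp (- a / 11)" unfolding a_def powr_def using upos by simp
  have goal: "P * exp (b - 2 * a) \<le> 4 * exp (- a / 11)"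
  proof (cases "t \<le> 1/2")
    case True
    have t0: "0 \<le> t" unfolding t_def by simp
    have P2: "P \<le> 2 * exp (2 * A)"
      using Psum geo_bound[OF t0 True, of "NN m c"] unfolding t_def by (simp add: exp_of_nat_mult[symmetric])
    show ?thesis
    proof (cases "b \<le> 21 * a / 11")
      case True
      have "P * exp (b - 2 * a) \<le> 1 * exp (b - 2 * a)" using P0 by (intro mult_right_mono) simp_all
      also have "\<dots> \<le> exp (- a / 11)" using True by simp
      also have "\<dots> \<le> 4 * exp (- a / 11)" by simp
      finally show ?thesis .
    next
      case False
      have "P * exp (b - 2 * a) \<le> 2 * exp (2 * A) * exp (b - 2 * a)" using P2 by (intro mult_right_mono) simp_all
      also have "\<dots> = 2 * exp (2 * A + b - 2 * a)" by (simp add: exp_add[symmetric])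
      also have "\<dots> \<le> 2 * exp (- a / 11)"
      proof -
        have e: "2 * A + b - 2 * a = 2 * g - b / 10" unfolding A_def by (simp add: algebra_simps)
        have "g \<le> a / 22" using H2 unfolding g_def a_def .
        then have "2 * A + b - 2 * a \<le> - a / 11" unfolding e using False a0 by linarith
        then show ?thesis by simp
      qed
      also have "\<dots> \<le> 4 * exp (- a / 11)" by simp
      finally show ?thesis .
    qed
  next
    case False
    then have "exp (- ln 2) < exp A" unfolding t_def by (simp add: exp_minus)
    then have AA: "- ln 2 < A" by simp
    have "P * exp (b - 2 * a) \<le> 1 * exp (b - 2 * a)" using P0 by (intro mult_right_mono) simp_all
    also have "\<dots> \<le> exp (2 * ln 2 + (- a / 11))"
    proof -
      have "b - 2 * a \<le> 2 * ln 2 + (- a / 11)" using AA H2 a0 ln2 unfolding A_def g_def a_def by linarith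
      then show ?thesis by simp
    qed
    also have "\<dots> = 4 * exp (- a / 11)"
    proof -
      have "exp (real 2 * ln 2) = (exp (ln 2))^2" by (rule exp_of_nat_mult)
      then have e4: "exp (2 * ln 2) = (4::real)" by simp
      show ?thesis by (simp only: exp_add e4)
    qed
    finally show ?thesis .
  qed
  show ?thesis using goal eqR eqT unfolding P_def by simp
qed



theorem mainTheorem4:
  fixes u m c d :: "nat \<Rightarrow> nat" and q :: "nat \<Rightarrow> real"
  assumes "filterlim u at_top sequentially"
    and "\<And>n. c n \<ge> 1"
    and "\<And>n. d n \<ge> 1"
    and "(\<lambda>n. ln (real (c n))) \<in> o(\<lambda>n. ln (real (u n)))"
    and "(\<lambda>n. real (c n) * ln (real (c n + d n))) \<in> o(\<lambda>n. real (m n) * ln 2)"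
    and "\<And>n. q n > 0"
  shows "(\<lambda>n. Pq (u n) (m n) (c n) (d n) (q n))
           \<in> o(\<lambda>n. real (u n) ^ 2 / 2 powr (real (m n) * q n))"
proof -
  have E1: "eventually (\<lambda>n. u n \<ge> 1) sequentially" using assms(1) unfolding filterlim_at_top by blast
  have E2: "eventually (\<lambda>n. norm (ln (real (c n))) \<le> 1/22 * norm (ln (real (u n)))) sequentially"
    using landau_o.smallD[OF assms(4), of "1/22"] by simp
  have E3: "eventually (\<lambda>n. norm (real (c n) * ln (real (c n + d n))) \<le> 1/100 * norm (real (m n) * ln 2)) sequentially"
    using landau_o.smallD[OF assms(5), of "1/100"] by simp
  have bound: "eventually (\<lambda>n. norm (Pq (u n) (m n) (c n) (d n) (q n) / (real (u n) ^ 2 / 2 powr (real (m n) * q n)))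
        \<le> 4 * real (u n) powr (-1/11)) sequentially"
    using E1 E2 E3
  proof eventually_elim
    case (elim n)
    have c: "c n \<ge> 1" and d: "d n \<ge> 1" and q: "q n > 0" using assms by auto
    have H2: "ln (real (c n)) \<le> ln (real (u n)) / 22" using elim(1,2) c by simp
    have "real (c n) * ln (real (c n + d n)) \<le> 1/100 * (real (m n) * ln 2)" using elim(3) c by simp
    then have H1: "5 * real (c n) * ln (real (c n + d n)) \<le> real (m n) * ln 2 / 20" by simp
    have nn: "0 \<le> Pq (u n) (m n) (c n) (d n) (q n) / (real (u n) ^ 2 / 2 powr (real (m n) * q n))"
      using Pq_nonneg by simp
    show ?case using final_bound[OF c d q elim(1) H1 H2] nn by simp
  qed
  have ru: "filterlim (\<lambda>n. real (u n)) at_top sequentially"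
    by (rule filterlim_compose[OF filterlim_real_sequentially assms(1)])
  have "((\<lambda>n. 4 * real (u n) powr (-1/11)) \<longlongrightarrow> 4 * 0) sequentially"
    by (intro tendsto_mult tendsto_const tendsto_neg_powr[OF _ ru]) simp
  then have lim: "((\<lambda>n. 4 * real (u n) powr (-1/11)) \<longlongrightarrow> 0) sequentially" by simp
  have "((\<lambda>n. Pq (u n) (m n) (c n) (d n) (q n) / (real (u n) ^ 2 / 2 powr (real (m n) * q n))) \<longlongrightarrow> 0) sequentially"
    by (rule Lim_null_comparison[OF bound lim])
  moreover have "eventually (\<lambda>n. real (u n) ^ 2 / 2 powr (real (m n) * q n) \<noteq> 0) sequentially"
    using E1 by eventually_elim simp
  ultimately show ?thesis by (rule smalloI_tendsto)
qed

end
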